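(* Assume $q\ge3$. Then $BC(0)=1$, and for every positive integer $n$ divisible by $q-1$ and every $\lambda\in\mathbb{F}_q$, \[ (1-(\theta-\lambda)^n)\,BC(n)=\sum_{\substack{\beta\in\mathbb{N}^{q-1}\\ n-|q^\beta|\ge0}}\left[\begin{matrix} n\\ n-|q^\beta|,\ |q^\beta|\end{matrix}\right](\theta-\lambda)^{n-1-|q^\beta|}\,BC(n-|q^\beta|). \]
   Context: $A=\mathbb{F}_q[\theta]$, $K=\mathbb{F}_q(\theta)$. $D_i$ is the product of all monic polynomials of degree $i$ in $A$, and $e_C(z)=\sum_{j\ge0}z^{q^j}/D_j$. For $n=\sum_i n_iq^i$ written in base $q$ ($0\le n_i\le q-1$), the Carlitz factorial is $\Pi(n)=\prod_i D_i^{n_i}$, and for non-negative integers $n,k_1,\dots,k_j$, $\left[\begin{smallmatrix} n\\ k_1,\dots,k_j\end{smallmatrix}\right]=\Pi(n)/(\Pi(k_1)\cdots\Pi(k_j))\in K$. The Bernoulli–Carlitz numbers $BC(n)\in K$, for $n\ge0$ divisible by $q-1$, are defined by $z/e_C(z)=\sum_{n\ge0,\,(q-1)\mid n}\frac{BC(n)}{\Pi(n)}z^n$. For $\beta\in\mathbb{N}^{q-1}$, $|q^\beta|=\sum_i q^{\beta_i}$. *)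

theory Defs
  imports "HOL-Computational_Algebra.Computational_Algebra" "HOL-Library.Cardinality"
begin

text \<open>Throughout, the finite field F_q is a type 'a of class {field, finite}, q = CARD('a);
  A = 'a poly, K = 'a poly fract, and \<theta> is the polynomial variable [:0,1:].\<close>

definition Dpoly :: "nat \<Rightarrow> 'a::{field,finite} poly" where
  "Dpoly i = (\<Prod>p\<in>{p::'a poly. lead_coeff p = 1 \<and> degree p = i}. p)"

definition Dfr :: "nat \<Rightarrow> 'a::{field,finite} poly fract" where
  "Dfr i = to_fract (Dpoly i)"

text \<open>Carlitz factorial: \<Pi>(n) = \<Prod>_i D_i^{n_i}, n_i the base-q digits of n
  (digits with index i > n vanish since q^i > n).\<close>
definition CPi :: "nat \<Rightarrow> 'a::{field,finite} poly fract" where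
  "CPi n = (\<Prod>i\<le>n. Dfr i ^ ((n div (CARD('a) ^ i)) mod CARD('a)))"

definition Cbinom :: "nat \<Rightarrow> nat list \<Rightarrow> 'a::{field,finite} poly fract" where
  "Cbinom n ks = CPi n / (\<Prod>k\<leftarrow>ks. (CPi k :: 'a poly fract))"

text \<open>Carlitz exponential e_C(z) = \<Sum>_j z^{q^j}/D_j as a formal power series over K.\<close>
definition carlitz_exp :: "'a::{field,finite} poly fract fps" where
  "carlitz_exp = Abs_fps (\<lambda>m. if (\<exists>j. m = CARD('a) ^ j)
        then inverse (Dfr (THE j. m = CARD('a) ^ j) :: 'a poly fract) else 0)"

definition BC :: "nat \<Rightarrow> 'a::{field,finite} poly fract" where
  "BC n = CPi n * fps_nth (fps_X / (carlitz_exp :: 'a poly fract fps)) n"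

definition theta :: "'a::{field,finite} poly fract" where
  "theta = to_fract [:0, 1:]"

text \<open>|q^\<beta>| for \<beta> \<in> \<nat>^{q-1}, \<beta> represented as a function on {0..<q-1}.\<close>
definition qabs :: "'a::{field,finite} itself \<Rightarrow> (nat \<Rightarrow> nat) \<Rightarrow> nat" where
  "qabs _ \<beta> = (\<Sum>i<CARD('a) - 1. CARD('a) ^ \<beta> i)"

end

theory Submission
  imports Defs
begin


lemma card_ge2: "CARD('a::{field,finite}) \<ge> 2"
proof -
  have "{0::'a,1} \<subseteq> UNIV" by simp
  hence "card {0::'a,1} \<le> CARD('a)" by (intro card_mono) auto
  thus ?thesis by simp
qed

lemma pow_card: "(x::'a::{field,finite}) ^ CARD('a) = x"
proof (cases "x = 0")
  case False
  have "x * (\<Prod>y\<in>UNIV-{0}. x * y) = x * x ^ (card (UNIV :: 'a set) - 1) * \<Prod>(UNIV-{0})"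
    by (simp add: prod.distrib mult_ac)
  also have "x * x ^ (card (UNIV :: 'a set) - 1) = x ^ Suc (card (UNIV :: 'a set) - 1)"
    by (subst power_Suc) auto
  also have "Suc (card (UNIV :: 'a set) - 1) = card (UNIV :: 'a set)"
    using finite_UNIV_card_ge_0[where ?'a = 'a] by simp
  also have "(\<Prod>y\<in>UNIV-{0}. x * y) = (\<Prod>y\<in>UNIV-{0}. y)"
    by (rule prod.reindex_bij_witness[of _ "\<lambda>y. y / x" "\<lambda>y. x * y"]) (use False in auto)
  finally show ?thesis
    by simp
qed (use finite_UNIV_card_ge_0[where ?'a = 'a] in auto)

lemma pow_card_pow: "(x::'a::{field,finite}) ^ (CARD('a) ^ j) = x"
  by (induction j) (simp_all add: pow_card power_mult mult.commute[of "CARD('a)"])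

lemma binom_vanish:
  assumes "0 < k" "k < CARD('a::{field,finite})"
  shows "of_nat (CARD('a) choose k) = (0::'a)"
proof -
  define q where "q = CARD('a)"
  have q2: "q \<ge> 2" using card_ge2[where 'a='a] by (simp add: q_def)
  have eq: "[:1,1:]^q = (monom 1 q + 1 :: 'a poly)"
  proof (rule poly_eqI_degree_lead_coeff[where n=q and A=UNIV])
    show "coeff ([:1,1:]^q) q = coeff (monom 1 q + 1 :: 'a poly) q"
      using q2 by (simp add: coeff_linear_poly_power)
    show "q \<le> card (UNIV::'a set)" by (simp add: q_def)
    show "degree ([:1, 1:] ^ q :: 'a poly) \<le> q"
      by (rule order.trans[OF degree_power_le]) simp
    show "degree (monom 1 q + 1 :: 'a poly) \<le> q"
      by (metis degree_add_le degree_monom_le degree_1 le0 dual_order.trans)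
    fix z :: 'a
    show "poly ([:1, 1:] ^ q) z = poly (monom 1 q + 1) z"
      by (simp add: poly_monom q_def pow_card add.commute)
  qed
  have 1: "coeff ([:1,1:]^q :: 'a poly) k = of_nat (q choose k)"
    using assms by (simp add: coeff_linear_poly_power q_def)
  have 2: "coeff (monom 1 q + 1 :: 'a poly) k = 0" using assms by (simp add: q_def coeff_monom)
  show ?thesis using 1 2 eq by (simp add: q_def)
qed

lemma frob_gen:
  fixes x y :: "'b::comm_ring_1"
  assumes van: "\<And>k. 0 < k \<Longrightarrow> k < q \<Longrightarrow> of_nat (q choose k) = (0::'b)" and q: "q > 0"
  shows "(x + y) ^ q = x ^ q + y ^ q"
proof -
  have "(x + y) ^ q = (\<Sum>k\<le>q. of_nat (q choose k) * x ^ k * y ^ (q - k))"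
    by (rule binomial_ring)
  also have "\<dots> = (\<Sum>k\<in>{0,q}. of_nat (q choose k) * x ^ k * y ^ (q - k))"
    by (intro sum.mono_neutral_right ballI) (auto simp: van)
  finally show ?thesis
    using q by (simp add: add_ac)
qed

lemma van_poly: "0 < k \<Longrightarrow> k < CARD('a) \<Longrightarrow> of_nat (CARD('a) choose k) = (0::'a::{field,finite} poly)"
proof -
  assume a: "0 < k" "k < CARD('a)"
  have "of_nat (CARD('a) choose k) = [:of_nat (CARD('a) choose k)::'a:]" by (rule of_nat_poly)
  also have "\<dots> = 0" using binom_vanish[OF a] by simp
  finally show ?thesis .
qed

lemma to_fract_of_nat: "to_fract (of_nat n) = of_nat n"
  by (induction n) simp_all

lemma van_fract: "0 < k \<Longrightarrow> k < CARD('a) \<Longrightarrow> of_nat (CARD('a) choose k) = (0::'a::{field,finite} poly fract)"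
proof -
  assume a: "0 < k" "k < CARD('a)"
  have "of_nat (CARD('a) choose k) = to_fract (of_nat (CARD('a) choose k) :: 'a poly)"
    by (rule to_fract_of_nat[symmetric])
  also have "\<dots> = 0" using van_poly[OF a] by simp
  finally show ?thesis .
qed

lemma van_fps: "0 < k \<Longrightarrow> k < CARD('a) \<Longrightarrow> of_nat (CARD('a) choose k) = (0::'a::{field,finite} poly fract fps)"
proof -
  assume a: "0 < k" "k < CARD('a)"
  have "of_nat (CARD('a) choose k) = fps_const (of_nat (CARD('a) choose k) :: 'a poly fract)"
    by (rule fps_of_nat[symmetric])
  also have "\<dots> = 0" using van_fract[OF a] by simp
  finally show ?thesis .
qed

lemma frob_poly: "(x + y :: 'a::{field,finite} poly) ^ CARD('a) = x ^ CARD('a) + y ^ CARD('a)"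
  by (rule frob_gen) (auto simp: van_poly)

lemma frob_fps: "(x + y :: 'a::{field,finite} poly fract fps) ^ CARD('a) = x ^ CARD('a) + y ^ CARD('a)"
  by (rule frob_gen) (auto simp: van_fps)

lemma frob_poly_diff: "(x - y :: 'a::{field,finite} poly) ^ CARD('a) = x ^ CARD('a) - y ^ CARD('a)"
  using frob_poly[of "x - y" y] by (simp add: algebra_simps)

lemma frob_poly_diff_pow: "(x - y :: 'a::{field,finite} poly) ^ (CARD('a)^j) = x ^ (CARD('a)^j) - y ^ (CARD('a)^j)"
  by (induction j) (simp_all add: power_mult frob_poly_diff mult.commute[of "CARD('a)"])

lemma frob_fps_sum: "(sum f A :: 'a::{field,finite} poly fract fps) ^ CARD('a) = (\<Sum>i\<in>A. f i ^ CARD('a))"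
  by (induction A rule: infinite_finite_induct) (auto simp: frob_fps power_0_left)



lemma prod_smult:
  fixes y a :: "'a::{field,finite} poly"
  shows "(\<Prod>c\<in>(UNIV::'a set). y - smult c a) = y ^ CARD('a) - a ^ (CARD('a) - 1) * y"
proof (cases "a = 0")
  case True
  have "CARD('a) - 1 > 0" using card_ge2[where 'a='a] by simp
  with True show ?thesis by simp
next
  case False
  define q where "q = CARD('a)"
  have q2: "q \<ge> 2" using card_ge2[where 'a='a] by (simp add: q_def)
  define P1 :: "'a poly poly" where "P1 = (\<Prod>c\<in>(UNIV::'a set). [:- smult c a, 1:])"
  define P2 :: "'a poly poly" where "P2 = monom 1 q - [:0, a^(q-1):]"
  have degP1: "degree P1 = q"
    unfolding P1_def by (subst degree_prod_eq_sum_degree) (auto simp: q_def)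
  have lcP1: "lead_coeff P1 = 1"
    unfolding P1_def by (simp add: lead_coeff_prod)
  have injA: "inj (\<lambda>c::'a. smult c a)"
  proof (rule injI)
    fix x y :: 'a assume "smult x a = smult y a"
    hence "smult (x - y) a = 0" by (simp add: smult_diff_left)
    with False show "x = y" by simp
  qed
  have "P1 = P2"
  proof (rule poly_eqI_degree_lead_coeff[where n=q and A="range (\<lambda>c. smult c a)"])
    obtain k where k: "q = Suc (Suc k)" using q2 by (metis add_2_eq_Suc le_Suc_ex)
    show "coeff P1 q = coeff P2 q"
      using lcP1 degP1 by (simp add: P2_def k)
    show "q \<le> card (range (\<lambda>c. smult c a))"
      using injA by (simp add: card_image q_def)
    show "degree P1 \<le> q" using degP1 by simp
    show "degree P2 \<le> q" unfolding P2_def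
      by (rule order.trans[OF degree_diff_le_max]) (use q2 in \<open>auto simp: degree_monom_le\<close>)
    fix z assume "z \<in> range (\<lambda>c. smult c a)"
    then obtain c' where z: "z = smult c' a" by auto
    have "poly P1 z = 0"
      unfolding P1_def poly_prod
      by (subst prod_zero_iff) (auto simp: z intro!: bexI[of _ c'])
    moreover have "poly P2 z = 0"
    proof -
      have aq: "a ^ (q - 1) * a = a ^ q"
        using q2 by (metis Suc_diff_1 less_le_trans pos2 power_Suc2)
      have 1: "poly P2 z = z ^ q - a ^ (q - 1) * z" by (simp add: P2_def poly_monom)
      have 2: "a ^ (q - 1) * z = smult c' (a ^ q)" using aq by (simp add: z mult_smult_right)
      have 3: "z ^ q = smult c' (a ^ q)"
        by (simp add: z smult_power q_def pow_card)
      show ?thesis by (simp only: 1 2 3 diff_self)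
    qed
    ultimately show "poly P1 z = poly P2 z" by simp
  qed
  hence "poly P1 y = poly P2 y" by simp
  moreover have "poly P1 y = (\<Prod>c\<in>(UNIV::'a set). poly [:- smult c a, 1:] y)"
    by (simp only: P1_def poly_prod)
  moreover have "(\<Prod>c\<in>(UNIV::'a set). poly [:- smult c a, 1:] y) = (\<Prod>c\<in>(UNIV::'a set). y - smult c a)"
    by (rule prod.cong[OF refl]) simp
  moreover have "poly P2 y = y ^ q - a ^ (q - 1) * y" by (simp add: P2_def poly_monom)
  ultimately show ?thesis by (simp only: q_def)
qed


fun psi :: "nat \<Rightarrow> 'a::{field,finite} poly \<Rightarrow> 'a poly" where
  "psi 0 x = x"
| "psi (Suc j) x = psi j x ^ CARD('a) - psi j (monom 1 j) ^ (CARD('a) - 1) * psi j x"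

lemma psi_add: "psi j (x + y) = psi j x + psi j y"
  by (induction j arbitrary: x y) (simp_all add: frob_poly algebra_simps)

lemma psi_smult: "psi j (smult c x) = smult c (psi j x)"
  by (induction j arbitrary: x) (simp_all add: smult_power pow_card mult_smult_right smult_diff_right)

lemma psi_uminus: "psi j (- x) = - psi j x"
  using psi_smult[of j "-1" x] by simp

lemma psi_diff: "psi j (x - y) = psi j x - psi j y"
  using psi_add[of j x "-y"] psi_uminus[of j y] by simp

definition V :: "nat \<Rightarrow> 'a::{field,finite} poly set" where
  "V j = {p. \<forall>i\<ge>j. coeff p i = 0}"

lemma V_0: "V 0 = {0}"
  by (auto simp: V_def poly_eq_iff)

lemma V_Suc: "V (Suc j) = (\<lambda>(v,c). v + monom c j) ` (V j \<times> UNIV)"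
proof
  show "V (Suc j) \<subseteq> (\<lambda>(v,c). v + monom c j) ` (V j \<times> UNIV)"
  proof
    fix p assume p: "p \<in> V (Suc j)"
    have "p - monom (coeff p j) j \<in> V j"
      using p by (auto simp: V_def coeff_monom)
    thus "p \<in> (\<lambda>(v,c). v + monom c j) ` (V j \<times> UNIV)"
      by (intro image_eqI[of _ _ "(p - monom (coeff p j) j, coeff p j)"]) auto
  qed
  show "(\<lambda>(v,c). v + monom c j) ` (V j \<times> UNIV) \<subseteq> V (Suc j)"
    by (auto simp: V_def coeff_monom)
qed

lemma V_inj: "inj_on (\<lambda>(v,c). v + monom c j) (V j \<times> UNIV)"
proof (rule inj_onI, clarsimp)
  fix v c v' c' assume v: "v \<in> V j" "v' \<in> V j" and eq: "v + monom c j = v' + monom c' j"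
  have "coeff (v + monom c j) j = coeff (v' + monom c' j) j" by (simp add: eq)
  hence "c = c'" using v by (simp add: V_def)
  with eq show "v = v' \<and> c = c'" by simp
qed

lemma finite_V: "finite (V j)"
  by (induction j) (simp_all add: V_0 V_Suc)

lemma V_uminus: "x \<in> V j \<Longrightarrow> - x \<in> V j"
  by (simp add: V_def)

lemma monom_V: "i < j \<Longrightarrow> monom 1 i \<in> V j"
  by (simp add: V_def coeff_monom)

lemma prod_V: "(\<Prod>v\<in>V j. x - v) = psi j (x::'a::{field,finite} poly)"
proof (induction j arbitrary: x)
  case 0
  then show ?case by (simp add: V_0)
next
  case (Suc j)
  have "(\<Prod>v\<in>V (Suc j). x - v) = (\<Prod>vc\<in>V j \<times> UNIV. x - (fst vc + monom (snd vc) j))"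
    unfolding V_Suc by (subst prod.reindex[OF V_inj]) (simp add: case_prod_beta)
  also have "\<dots> = (\<Prod>v\<in>V j. \<Prod>c\<in>UNIV. (x - monom c j) - v)"
    unfolding prod.cartesian_product by (intro prod.cong) (auto simp: algebra_simps)
  also have "\<dots> = (\<Prod>c\<in>UNIV. \<Prod>v\<in>V j. (x - monom c j) - v)"
    by (rule prod.swap)
  also have "\<dots> = (\<Prod>c\<in>UNIV. psi j x - smult c (psi j (monom 1 j)))"
  proof -
    define P where "P = psi j (monom 1 j :: 'a poly)"
    have h: "\<And>c. psi j (monom c j) = smult c P"
      unfolding P_def by (metis psi_smult smult_monom mult.right_neutral)
    show ?thesis unfolding Suc psi_diff h P_def[symmetric] by simp
  qed
  also have "\<dots> = psi (Suc j) x" by (simp add: prod_smult)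
  finally show ?case .
qed

lemma psi_V: "v \<in> V j \<Longrightarrow> psi j v = 0"
  by (subst prod_V[symmetric]) (auto simp: finite_V)

lemma monic_set: "{p::'a::{field,finite} poly. lead_coeff p = 1 \<and> degree p = i} = (\<lambda>v. monom 1 i + v) ` V i"
proof
  show "{p::'a poly. lead_coeff p = 1 \<and> degree p = i} \<subseteq> (\<lambda>v. monom 1 i + v) ` V i"
  proof
    fix p :: "'a poly" assume p: "p \<in> {p. lead_coeff p = 1 \<and> degree p = i}"
    have "p - monom 1 i \<in> V i"
      using p by (auto simp: V_def coeff_monom coeff_eq_0)
    thus "p \<in> (\<lambda>v. monom 1 i + v) ` V i"
      by (intro image_eqI[of _ _ "p - monom 1 i"]) auto
  qed
  show "(\<lambda>v. monom 1 i + v) ` V i \<subseteq> {p::'a poly. lead_coeff p = 1 \<and> degree p = i}"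
  proof
    fix p assume "p \<in> (\<lambda>v. monom 1 i + v) ` V i"
    then obtain v where v: "v \<in> V i" and p: "p = monom 1 i + v" by auto
    have ci: "coeff p i = 1" using v by (simp add: p V_def)
    have "degree p = i"
    proof (rule le_antisym)
      show "degree p \<le> i" using v by (intro degree_le) (auto simp: p V_def coeff_monom)
      show "i \<le> degree p" using ci by (intro le_degree) simp
    qed
    with ci show "p \<in> {p. lead_coeff p = 1 \<and> degree p = i}" by simp
  qed
qed

lemma Dpoly_psi: "(Dpoly i :: 'a::{field,finite} poly) = psi i (monom 1 i)"
proof -
  have "Dpoly i = (\<Prod>v\<in>V i. (monom 1 i + v :: 'a poly))"
    unfolding Dpoly_def monic_set by (subst prod.reindex) (auto intro: inj_onI)
  also have "\<dots> = (\<Prod>v\<in>V i. monom 1 i - v)"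
    by (rule prod.reindex_bij_witness[of _ uminus uminus]) (auto simp: V_uminus)
  also have "\<dots> = psi i (monom 1 i)" by (rule prod_V)
  finally show ?thesis .
qed



definition th :: "'a::{field,finite} poly" where "th = monom 1 1"

definition br :: "nat \<Rightarrow> 'a::{field,finite} poly" where
  "br j = th ^ (CARD('a) ^ j) - th"

lemma ring_aux:
  fixes T Tq a A2 B2 bq bt bq' F Dq1 :: "'b::comm_ring_1"
  assumes "A2 = B2 - F * bq" "Dq1 * bt = bq' * F"
  shows "(Tq * A2 + bq' * B2 - Dq1 * (T * a + bt * bq)) - T * (A2 - Dq1 * a) = ((Tq - T) + bq') * A2"
proof -
  have "Dq1 * (T * a + bt * bq) = Dq1 * T * a + (Dq1 * bt) * bq" by (simp add: algebra_simps)
  also have "\<dots> = Dq1 * T * a + bq' * F * bq" using assms(2) by simp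
  finally have h: "Dq1 * (T * a + bt * bq) = Dq1 * T * a + bq' * F * bq" .
  show ?thesis unfolding h assms(1) by (simp add: algebra_simps)
qed

lemma psi_1: "psi (Suc 0) x = x ^ CARD('a) - (x::'a::{field,finite} poly)"
  by simp

lemma psi_theta_step:
  fixes x :: "'a::{field,finite} poly"
  assumes hA: "psi (Suc j) (th * x) = th * psi (Suc j) x + br (Suc j) * psi j x ^ CARD('a)"
      and hD: "psi (Suc j) (monom 1 (Suc j) :: 'a poly) = br (Suc j) * psi j (monom 1 j) ^ CARD('a)"
  shows "psi (Suc (Suc j)) (th * x) - th * psi (Suc (Suc j)) x = br (Suc (Suc j)) * psi (Suc j) x ^ CARD('a)"
proof -
  define q where "q = CARD('a)"
  have q1: "q = Suc (q - 1)" using card_ge2[where 'a='a] by (simp add: q_def)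
  define a where "a = psi (Suc j) x"
  define b where "b = psi j x"
  define E where "E = psi j (monom 1 j :: 'a poly)"
  define D where "D = psi (Suc j) (monom 1 (Suc j) :: 'a poly)"
  define \<beta> where "\<beta> = (br (Suc j) :: 'a poly)"
  have hA': "psi (Suc j) (th * x) = th * a + \<beta> * b ^ q"
    using hA by (simp add: a_def b_def \<beta>_def q_def)
  have e1: "psi (Suc (Suc j)) (th * x) = (th * a + \<beta> * b ^ q) ^ q - D ^ (q - 1) * (th * a + \<beta> * b ^ q)"
    by (simp only: psi.simps(2)[of "Suc j"] hA' D_def q_def)
  have e2: "psi (Suc (Suc j)) x = a ^ q - D ^ (q - 1) * a"
    by (simp only: psi.simps(2)[of "Suc j"] a_def D_def q_def)
  have e3: "(th * a + \<beta> * b ^ q) ^ q = th ^ q * a ^ q + \<beta> ^ q * (b ^ q) ^ q"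
    by (simp add: frob_poly power_mult_distrib q_def)
  have e4: "br (Suc (Suc j)) = (th ^ q - th) + \<beta> ^ q"
  proof -
    have "\<beta> ^ q = (th ^ (q ^ Suc j)) ^ q - th ^ q"
      by (simp add: \<beta>_def br_def frob_poly_diff q_def)
    also have "(th ^ (q ^ Suc j)) ^ q = (th ^ (q ^ Suc (Suc j)) :: 'a poly)"
      by (simp add: power_mult[symmetric] mult.commute)
    finally show ?thesis by (simp add: br_def q_def)
  qed
  have e5: "a ^ q = (b ^ q) ^ q - (E ^ (q - 1)) ^ q * b ^ q"
  proof -
    have "a = b ^ q - E ^ (q - 1) * b"
      by (simp only: a_def b_def E_def psi.simps(2)[of j] q_def)
    thus ?thesis by (simp add: frob_poly_diff power_mult_distrib q_def)
  qed
  have e6: "D ^ (q - 1) * \<beta> = \<beta> ^ q * (E ^ (q - 1)) ^ q"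
  proof -
    have "D = \<beta> * E ^ q" using hD by (simp add: D_def \<beta>_def E_def q_def)
    hence "D ^ (q - 1) * \<beta> = (\<beta> ^ (q - 1) * \<beta>) * (E ^ q) ^ (q - 1)"
      by (simp add: power_mult_distrib algebra_simps)
    also have "\<beta> ^ (q - 1) * \<beta> = \<beta> ^ q"
      by (subst (2) q1) (simp add: mult.commute)
    also have "(E ^ q) ^ (q - 1) = (E ^ (q - 1)) ^ q"
      by (simp add: power_mult[symmetric] mult.commute)
    finally show ?thesis .
  qed
  have "psi (Suc (Suc j)) (th * x) - th * psi (Suc (Suc j)) x
      = (th ^ q * a ^ q + \<beta> ^ q * (b ^ q) ^ q - D ^ (q - 1) * (th * a + \<beta> * b ^ q)) - th * (a ^ q - D ^ (q - 1) * a)"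
    by (simp only: e1 e2 e3)
  also have "\<dots> = ((th ^ q - th) + \<beta> ^ q) * a ^ q"
    by (rule ring_aux[OF e5 e6])
  also have "\<dots> = br (Suc (Suc j)) * psi (Suc j) x ^ CARD('a)"
    by (simp only: e4 a_def q_def)
  finally show ?thesis .
qed

lemma th_monom: "th * monom 1 j = (monom 1 (Suc j) :: 'a::{field,finite} poly)"
  by (simp add: th_def mult_monom)

lemma psi_D_from:
  assumes "psi (Suc j) ((th::'a::{field,finite} poly) * monom 1 j) - th * psi (Suc j) (monom 1 j) = br (Suc j) * psi j (monom 1 j) ^ CARD('a)"
  shows "psi (Suc j) (monom 1 (Suc j)) = br (Suc j) * psi j (monom 1 j :: 'a::{field,finite} poly) ^ CARD('a)"
proof -
  have "psi (Suc j) (monom 1 j :: 'a poly) = 0" by (rule psi_V) (simp add: monom_V)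
  with assms show ?thesis by (simp add: th_monom)
qed

lemma psi_theta:
  "(\<forall>x::'a::{field,finite} poly. psi (Suc j) (th * x) - th * psi (Suc j) x = br (Suc j) * psi j x ^ CARD('a))
   \<and> psi (Suc j) (monom 1 (Suc j)) = br (Suc j) * psi j (monom 1 j :: 'a poly) ^ CARD('a)"
proof (induction j)
  case 0
  have A: "\<forall>x::'a poly. psi (Suc 0) (th * x) - th * psi (Suc 0) x = br (Suc 0) * psi 0 x ^ CARD('a)"
    by (simp add: br_def power_mult_distrib algebra_simps)
  show ?case using A psi_D_from[of 0] by blast
next
  case (Suc j)
  have A: "\<forall>x::'a poly. psi (Suc (Suc j)) (th * x) - th * psi (Suc (Suc j)) x = br (Suc (Suc j)) * psi (Suc j) x ^ CARD('a)"
  proof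
    fix x :: "'a poly"
    have hA: "psi (Suc j) (th * x) = th * psi (Suc j) x + br (Suc j) * psi j x ^ CARD('a)"
      using Suc.IH by (metis diff_eq_eq add.commute)
    show "psi (Suc (Suc j)) (th * x) - th * psi (Suc (Suc j)) x = br (Suc (Suc j)) * psi (Suc j) x ^ CARD('a)"
      by (rule psi_theta_step[OF hA]) (use Suc.IH in blast)
  qed
  show ?case using A psi_D_from[of "Suc j"] by blast
qed

lemma Dpoly_rec: "(Dpoly (Suc j) :: 'a::{field,finite} poly) = br (Suc j) * Dpoly j ^ CARD('a)"
  using psi_theta[of j, where 'a='a] by (simp add: Dpoly_psi)

lemma Dpoly_0: "(Dpoly 0 :: 'a::{field,finite} poly) = 1"
  by (simp add: Dpoly_psi)

lemma Dpoly_nz: "(Dpoly j :: 'a::{field,finite} poly) \<noteq> 0"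
proof -
  have "finite {p::'a poly. lead_coeff p = 1 \<and> degree p = j}"
    by (simp add: monic_set finite_V)
  thus ?thesis unfolding Dpoly_def by (subst prod_zero_iff) auto
qed



lemma sum_if_const_card:
  fixes k :: nat shows "(\<Sum>i<k. if P i then (c::nat) else 0) = c * card {i. i < k \<and> P i}"
proof -
  have "(\<Sum>i<k. if P i then c else 0) = (\<Sum>i\<in>{i\<in>{..<k}. P i}. c)"
    by (rule sum.inter_filter[symmetric]) simp
  also have "{i\<in>{..<k}. P i} = {i. i < k \<and> P i}" by auto
  finally show ?thesis by (simp add: mult.commute)
qed

lemma digit_lemma:
  fixes q k e :: nat and g :: "nat \<Rightarrow> nat"
  assumes kq: "k < q"
  shows "((\<Sum>i<k. q ^ g i) div q ^ e) mod q = card {i. i < k \<and> g i = e}"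
proof -
  have q0: "q > 0" using kq by simp
  define c where "c = card {i. i < k \<and> g i = e}"
  have ck: "c \<le> k" unfolding c_def
    by (rule order.trans[OF card_mono[of "{..<k}"]]) auto
  define f1 where "f1 = (\<lambda>i. if g i < e then q ^ g i else 0)"
  define f2 where "f2 = (\<lambda>i. if g i = e then q ^ e else (0::nat))"
  define f3 where "f3 = (\<lambda>i. if g i > e then q ^ Suc e * q ^ (g i - Suc e) else (0::nat))"
  have pw: "q ^ g i = f1 i + f2 i + f3 i" for i
  proof -
    consider "g i < e" | "g i = e" | "g i > e" by linarith
    thus ?thesis
    proof cases
      case 3
      hence "Suc e + (g i - Suc e) = g i" by simp
      hence "q ^ Suc e * q ^ (g i - Suc e) = q ^ g i" by (metis power_add)
      thus ?thesis using 3 by (simp add: f1_def f2_def f3_def)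
    qed (auto simp: f1_def f2_def f3_def)
  qed
  have S: "(\<Sum>i<k. q ^ g i) = sum f1 {..<k} + q ^ e * (c + q * (\<Sum>i<k. if g i > e then q ^ (g i - Suc e) else 0))"
  proof -
    have "(\<Sum>i<k. q ^ g i) = sum f1 {..<k} + sum f2 {..<k} + sum f3 {..<k}"
      by (simp add: pw sum.distrib)
    also have "sum f2 {..<k} = q ^ e * c"
      unfolding f2_def c_def by (simp add: sum_if_const_card)
    also have "sum f3 {..<k} = q ^ e * (q * (\<Sum>i<k. if g i > e then q ^ (g i - Suc e) else 0))"
      unfolding f3_def sum_distrib_left by (intro sum.cong) auto
    finally show ?thesis by (simp add: algebra_simps)
  qed
  have lo: "sum f1 {..<k} < q ^ e"
  proof (cases e)
    case 0
    thus ?thesis by (simp add: f1_def)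
  next
    case (Suc e')
    have "sum f1 {..<k} \<le> (\<Sum>i<k. q ^ e')"
    proof (rule sum_mono)
      fix i assume "i \<in> {..<k}"
      show "f1 i \<le> q ^ e'"
        using Suc q0 by (auto simp: f1_def intro: power_increasing)
    qed
    also have "\<dots> = k * q ^ e'" by simp
    also have "\<dots> < q * q ^ e'" using kq q0 by simp
    finally show ?thesis by (simp add: Suc)
  qed
  have "(\<Sum>i<k. q ^ g i) div q ^ e = c + q * (\<Sum>i<k. if g i > e then q ^ (g i - Suc e) else 0)"
    unfolding S using lo q0 by (simp add: div_add1_eq[of "sum f1 {..<k}"] mult.commute[of "q^e"])
  thus ?thesis using ck kq unfolding c_def by simp
qed

lemma prod_group_pow:
  fixes f :: "nat \<Rightarrow> 'b::comm_monoid_mult" and g :: "nat \<Rightarrow> nat"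
  assumes "g ` {..<k} \<subseteq> {..N}"
  shows "(\<Prod>i<k. f (g i)) = (\<Prod>e\<le>N. f e ^ card {i. i < k \<and> g i = e})"
proof -
  have "(\<Prod>i<k. f (g i)) = (\<Prod>e\<le>N. \<Prod>i\<in>{i. i \<in> {..<k} \<and> g i = e}. f (g i))"
    by (rule prod.group[symmetric]) (use assms in auto)
  also have "\<dots> = (\<Prod>e\<le>N. f e ^ card {i. i < k \<and> g i = e})"
    by (intro prod.cong refl) auto
  finally show ?thesis .
qed

lemma CPi_qabs:
  assumes "k < CARD('a::{field,finite})"
  shows "(CPi (\<Sum>i<k. CARD('a) ^ g i) :: 'a poly fract) = (\<Prod>i<k. Dfr (g i))"
proof -
  define q where "q = CARD('a)"
  define N where "N = (\<Sum>i<k. q ^ g i)"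
  have q2: "q \<ge> 2" using card_ge2[where 'a='a] by (simp add: q_def)
  have sub: "g ` {..<k} \<subseteq> {..N}"
  proof
    fix x assume "x \<in> g ` {..<k}"
    then obtain i where i: "i < k" "x = g i" by auto
    have "x < 2 ^ x" by (rule less_exp)
    also have "(2::nat) ^ x \<le> q ^ x" using q2 by (rule power_mono) simp
    also have "q ^ x \<le> N" unfolding N_def i(2)
      by (rule member_le_sum[of i "{..<k}" "\<lambda>i. q ^ g i"]) (use i in auto)
    finally show "x \<in> {..N}" by simp
  qed
  have "(\<Prod>i<k. Dfr (g i) :: 'a poly fract) = (\<Prod>e\<le>N. Dfr e ^ card {i. i < k \<and> g i = e})"
    by (rule prod_group_pow[OF sub])
  also have "\<dots> = CPi N"
    unfolding CPi_def N_def using assms digit_lemma[of k q g] by (simp add: q_def)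
  finally show ?thesis by (simp add: N_def q_def)
qed



lemma to_fract_power: "to_fract (x ^ n) = to_fract x ^ n"
  by (induction n) simp_all

lemma Dfr_nz: "(Dfr j :: 'a::{field,finite} poly fract) \<noteq> 0"
  by (simp add: Dfr_def Dpoly_nz)

lemma Dfr_0: "(Dfr 0 :: 'a::{field,finite} poly fract) = 1"
  by (simp add: Dfr_def Dpoly_0)

lemma Dfr_rec: "(Dfr (Suc j) :: 'a::{field,finite} poly fract) = to_fract (br (Suc j)) * Dfr j ^ CARD('a)"
  by (simp add: Dfr_def Dpoly_rec to_fract_power)

lemma CPi_nz: "(CPi n :: 'a::{field,finite} poly fract) \<noteq> 0"
  by (simp add: CPi_def Dfr_nz)

lemma CPi_0: "(CPi 0 :: 'a::{field,finite} poly fract) = 1"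
  by (simp add: CPi_def)

lemma th_eq: "th = [:0, 1:]"
  by (simp add: th_def monom_Suc)

lemma t_eq: "theta - to_fract [:c:] = (to_fract (th - [:c:]) :: 'a::{field,finite} poly fract)"
  by (simp only: theta_def th_eq to_fract_diff)

lemma t_pow: "(th - [:c:]) ^ (CARD('a) ^ j) - (th - [:c:]) = (br j :: 'a::{field,finite} poly)"
  by (simp add: frob_poly_diff_pow poly_const_pow pow_card_pow br_def)

lemma t_nz: "th - [:c:] \<noteq> (0 :: 'a::{field,finite} poly)"
proof
  assume "th - [:c:] = (0 :: 'a poly)"
  hence "coeff (th - [:c:]) 1 = (0::'a)" by simp
  thus False by (simp add: th_eq)
qed

lemma q_gt1: "1 < CARD('a::{field,finite})"
  using card_ge2[where 'a='a] by simp

lemma e_nth_pow: "(carlitz_exp :: 'a::{field,finite} poly fract fps) $ (CARD('a) ^ j) = inverse (Dfr j)"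
proof -
  have "(THE j'. CARD('a) ^ j = CARD('a) ^ j') = j"
    using q_gt1[where 'a='a] by auto
  thus ?thesis by (auto simp: carlitz_exp_def)
qed

lemma e_nth_not: "\<not> (\<exists>j. m = CARD('a) ^ j) \<Longrightarrow> (carlitz_exp :: 'a::{field,finite} poly fract fps) $ m = 0"
  by (simp add: carlitz_exp_def)

definition eN :: "nat \<Rightarrow> 'a::{field,finite} poly fract fps" where
  "eN N = (\<Sum>j<N. fps_const (inverse (Dfr j)) * fps_X ^ (CARD('a) ^ j))"

lemma eN_nth:
  assumes "m < CARD('a) ^ N"
  shows "(eN N :: 'a::{field,finite} poly fract fps) $ m = carlitz_exp $ m"
proof (cases "\<exists>j. m = CARD('a) ^ j")
  case True
  then obtain j where j: "m = CARD('a) ^ j" by auto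
  have jN: "j < N" using assms j q_gt1[where 'a='a] by (simp add: power_strict_increasing_iff)
  have "(eN N :: 'a poly fract fps) $ m = (\<Sum>j'<N. inverse (Dfr j') * (if m = CARD('a) ^ j' then 1 else 0))"
    by (simp add: eN_def fps_sum_nth)
  also have "\<dots> = (\<Sum>j'<N. if j' = j then inverse (Dfr j) else 0)"
    using q_gt1[where 'a='a] by (intro sum.cong) (auto simp: j)
  also have "\<dots> = inverse (Dfr j)" using jN by simp
  finally show ?thesis by (simp add: j e_nth_pow)
next
  case False
  hence "(eN N :: 'a poly fract fps) $ m = 0"
    by (auto simp: eN_def fps_sum_nth intro!: sum.neutral)
  with False show ?thesis by (simp add: e_nth_not)
qed

lemma pow_agree:
  fixes f g :: "'b::comm_ring_1 fps"
  assumes "\<And>i. i \<le> m \<Longrightarrow> f $ i = g $ i"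
  shows "i \<le> m \<Longrightarrow> (f ^ k) $ i = (g ^ k) $ i"
proof (induction k arbitrary: i)
  case 0
  then show ?case by simp
next
  case (Suc k)
  have "(f ^ Suc k) $ i = (\<Sum>l=0..i. f $ l * (f ^ k) $ (i - l))"
    by (simp add: fps_mult_nth)
  also have "\<dots> = (\<Sum>l=0..i. g $ l * (g ^ k) $ (i - l))"
    using Suc by (intro sum.cong refl) (simp add: assms)
  also have "\<dots> = (g ^ Suc k) $ i" by (simp add: fps_mult_nth)
  finally show ?case .
qed

lemma m_less_pow: "m < CARD('a::{field,finite}) ^ m"
proof -
  have "m < 2 ^ m" by (rule less_exp)
  also have "(2::nat) ^ m \<le> CARD('a) ^ m" using card_ge2[where 'a='a] by (rule power_mono) simp
  finally show ?thesis .
qed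

lemma e_agree_eN:
  "(carlitz_exp ^ k :: 'a::{field,finite} poly fract fps) $ m = (eN (Suc m) ^ k) $ m"
proof (rule pow_agree[of m])
  fix i assume "i \<le> m"
  moreover have "m < CARD('a) ^ Suc m"
    using m_less_pow[of m, where 'a='a] q_gt1[where 'a='a]
    by (metis less_trans power_strict_increasing_iff lessI)
  ultimately show "(carlitz_exp :: 'a poly fract fps) $ i = eN (Suc m) $ i"
    by (simp add: eN_nth)
qed simp

lemma eq_nth:
  "((carlitz_exp :: 'a::{field,finite} poly fract fps) ^ CARD('a)) $ m
     = (\<Sum>j<Suc m. inverse (Dfr j) ^ CARD('a) * (if m = CARD('a) ^ j * CARD('a) then 1 else 0))"
proof -
  have "(eN (Suc m) :: 'a poly fract fps) ^ CARD('a)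
      = (\<Sum>j<Suc m. fps_const (inverse (Dfr j) ^ CARD('a)) * fps_X ^ (CARD('a) ^ j * CARD('a)))"
    unfolding eN_def frob_fps_sum by (simp add: power_mult_distrib power_mult)
  thus ?thesis by (simp add: e_agree_eN fps_sum_nth)
qed



lemma func_eq:
  fixes c :: "'a::{field,finite}"
  defines "t \<equiv> theta - to_fract [:c:] :: 'a poly fract"
  shows "t ^ m * (carlitz_exp :: 'a poly fract fps) $ m = t * carlitz_exp $ m + (carlitz_exp ^ CARD('a)) $ m"
proof -
  define q where "q = CARD('a)"
  have q1: "1 < q" using q_gt1[where 'a='a] by (simp add: q_def)
  have tt: "t = to_fract (th - [:c:])" by (simp add: t_def t_eq)
  have tpow: "t ^ (q ^ j) - t = to_fract (br j)" for j
  proof -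
    have "to_fract (br j :: 'a poly) = to_fract ((th - [:c:]) ^ (q ^ j) - (th - [:c:]))"
      by (simp only: t_pow q_def)
    also have "\<dots> = t ^ (q ^ j) - t" by (simp only: to_fract_diff to_fract_power tt)
    finally show ?thesis by simp
  qed
  show ?thesis
  proof (cases "\<exists>j. m = q ^ j")
    case True
    then obtain j where j: "m = q ^ j" by auto
    show ?thesis
    proof (cases j)
      case 0
      have "((carlitz_exp :: 'a poly fract fps) ^ CARD('a)) $ m = 0"
        unfolding eq_nth using q1 by (intro sum.neutral) (auto simp: j 0 q_def)
      moreover have "(carlitz_exp :: 'a poly fract fps) $ m = 1"
        using e_nth_pow[of 0, where 'a='a] by (simp add: j 0 Dfr_0)
      ultimately show ?thesis by (simp add: j 0)
    next
      case (Suc j')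
      have jm: "j' < Suc m"
      proof -
        have "j' < j" by (simp add: Suc)
        also have "j < q ^ j" using m_less_pow[of j, where 'a='a] by (simp add: q_def)
        finally show ?thesis by (simp add: j)
      qed
      have "((carlitz_exp :: 'a poly fract fps) ^ CARD('a)) $ m
          = (\<Sum>i<Suc m. if i = j' then inverse (Dfr j') ^ q else 0)"
        unfolding eq_nth using q1
        by (intro sum.cong refl) (auto simp: j Suc q_def power_Suc2[symmetric])
      also have "\<dots> = inverse (Dfr j') ^ q" using jm by simp
      finally have E: "((carlitz_exp :: 'a poly fract fps) ^ CARD('a)) $ m = inverse (Dfr j') ^ q" .
      have em: "(carlitz_exp :: 'a poly fract fps) $ m = inverse (Dfr (Suc j'))"
        using e_nth_pow[of j, where 'a='a] by (simp add: j Suc q_def)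
      have D: "(Dfr (Suc j') :: 'a poly fract) = to_fract (br (Suc j')) * Dfr j' ^ q"
        by (simp add: Dfr_rec q_def)
      have Dnz: "(Dfr (Suc j') :: 'a poly fract) \<noteq> 0" "(Dfr j' :: 'a poly fract) \<noteq> 0"
        by (simp_all add: Dfr_nz)
      have bnz: "to_fract (br (Suc j') :: 'a poly) \<noteq> 0" using Dnz D by auto
      have "t ^ m * inverse (Dfr (Suc j')) = t * inverse (Dfr (Suc j')) + (t ^ m - t) * inverse (Dfr (Suc j'))"
        by (simp add: algebra_simps)
      also have "(t ^ m - t) * inverse (Dfr (Suc j')) = inverse (Dfr j') ^ q"
        unfolding j Suc tpow D using bnz Dnz by (simp add: field_simps)
      finally show ?thesis by (simp add: em E)
    qed
  next
    case False
    have "((carlitz_exp :: 'a poly fract fps) ^ CARD('a)) $ m = 0"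
      unfolding eq_nth
    proof (intro sum.neutral ballI)
      fix i
      have "m \<noteq> CARD('a) ^ i * CARD('a)"
        using False by (metis power_Suc2 q_def)
      thus "inverse (Dfr i :: 'a poly fract) ^ CARD('a) * (if m = CARD('a) ^ i * CARD('a) then 1 else 0) = 0"
        by simp
    qed
    with False show ?thesis by (simp add: e_nth_not q_def)
  qed
qed

definition scale :: "'b::comm_ring_1 \<Rightarrow> 'b fps \<Rightarrow> 'b fps" where
  "scale t f = Abs_fps (\<lambda>n. t ^ n * f $ n)"

lemma scale_nth [simp]: "scale t f $ n = t ^ n * f $ n"
  by (simp add: scale_def)

lemma scale_mult: "scale t (f * g) = scale t f * scale t g"
proof (rule fps_ext)
  fix n
  have "scale t (f * g) $ n = (\<Sum>i=0..n. t ^ i * f $ i * (t ^ (n - i) * g $ (n - i)))"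
    unfolding scale_nth fps_mult_nth sum_distrib_left
  proof (intro sum.cong refl)
    fix i assume "i \<in> {0..n}"
    hence "t ^ n = t ^ i * t ^ (n - i)" by (simp flip: power_add)
    thus "t ^ n * (f $ i * g $ (n - i)) = t ^ i * f $ i * (t ^ (n - i) * g $ (n - i))"
      by (simp add: algebra_simps)
  qed
  also have "\<dots> = (scale t f * scale t g) $ n" by (simp add: fps_mult_nth)
  finally show "scale t (f * g) $ n = (scale t f * scale t g) $ n" .
qed

lemma scale_X: "scale t fps_X = fps_const t * fps_X"
proof (rule fps_ext)
  fix n show "scale t fps_X $ n = (fps_const t * fps_X) $ n" by (cases "n = 1") auto
qed

lemma fps_const_prod: "(\<Prod>i\<in>A. fps_const (f i)) = fps_const (\<Prod>i\<in>A. f i)"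
  by (induction A rule: infinite_finite_induct) (simp_all add: fps_const_mult)

lemma P_nth:
  assumes kq: "k < CARD('a::{field,finite})"
  shows "((carlitz_exp :: 'a poly fract fps) ^ k) $ j
     = (\<Sum>\<gamma>\<in>{\<gamma>. \<gamma> \<in> {..<k} \<rightarrow>\<^sub>E UNIV \<and> (\<Sum>i<k. CARD('a) ^ \<gamma> i) = j}. inverse (CPi j))"
proof -
  define q where "q = CARD('a)"
  define N where "N = Suc j"
  define a where "a = (\<lambda>l. inverse (Dfr l) :: 'a poly fract)"
  have "(eN N :: 'a poly fract fps) ^ k = (\<Prod>i<k. eN N)" by simp
  also have "\<dots> = (\<Prod>i<k. \<Sum>l<N. fps_const (a l) * fps_X ^ (q ^ l))"
    by (simp add: eN_def a_def q_def)
  also have "\<dots> = (\<Sum>\<gamma>\<in>PiE {..<k} (\<lambda>_. {..<N}). \<Prod>i<k. fps_const (a (\<gamma> i)) * fps_X ^ (q ^ \<gamma> i))"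
    by (rule prod_sum_PiE) auto
  also have "\<dots> = (\<Sum>\<gamma>\<in>PiE {..<k} (\<lambda>_. {..<N}). fps_const (\<Prod>i<k. a (\<gamma> i)) * fps_X ^ (\<Sum>i<k. q ^ \<gamma> i))"
    by (simp add: prod.distrib fps_const_prod power_sum)
  finally have EN: "(eN N :: 'a poly fract fps) ^ k = \<dots>" .
  have "((carlitz_exp :: 'a poly fract fps) ^ k) $ j = ((eN N :: 'a poly fract fps) ^ k) $ j"
    by (simp add: e_agree_eN N_def)
  also have "\<dots> = (\<Sum>\<gamma>\<in>PiE {..<k} (\<lambda>_. {..<N}). if (\<Sum>i<k. q ^ \<gamma> i) = j then (\<Prod>i<k. a (\<gamma> i)) else 0)"
    unfolding EN fps_sum_nth by (intro sum.cong refl) auto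
  also have "\<dots> = (\<Sum>\<gamma>\<in>{\<gamma>\<in>PiE {..<k} (\<lambda>_. {..<N}). (\<Sum>i<k. q ^ \<gamma> i) = j}. \<Prod>i<k. a (\<gamma> i))"
    by (rule sum.inter_filter[symmetric]) (simp add: finite_PiE)
  also have "{\<gamma>\<in>PiE {..<k} (\<lambda>_. {..<N}). (\<Sum>i<k. q ^ \<gamma> i) = j}
           = {\<gamma>. \<gamma> \<in> {..<k} \<rightarrow>\<^sub>E UNIV \<and> (\<Sum>i<k. q ^ \<gamma> i) = j}"
  proof (intro equalityI subsetI)
    fix \<gamma> assume "\<gamma> \<in> {\<gamma>. \<gamma> \<in> {..<k} \<rightarrow>\<^sub>E UNIV \<and> (\<Sum>i<k. q ^ \<gamma> i) = j}"
    hence g: "\<gamma> \<in> {..<k} \<rightarrow>\<^sub>E UNIV" "(\<Sum>i<k. q ^ \<gamma> i) = j" by auto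
    have "\<gamma> i < N" if "i < k" for i
    proof -
      have "\<gamma> i < q ^ \<gamma> i" using m_less_pow[of "\<gamma> i", where 'a='a] by (simp add: q_def)
      also have "q ^ \<gamma> i \<le> j" unfolding g(2)[symmetric]
        by (rule member_le_sum[of i "{..<k}" "\<lambda>i. q ^ \<gamma> i"]) (use that in auto)
      finally show ?thesis by (simp add: N_def)
    qed
    with g show "\<gamma> \<in> {\<gamma>\<in>PiE {..<k} (\<lambda>_. {..<N}). (\<Sum>i<k. q ^ \<gamma> i) = j}"
      by (auto simp: PiE_iff)
  qed (auto simp: PiE_iff)
  also have "(\<Sum>\<gamma>\<in>{\<gamma>. \<gamma> \<in> {..<k} \<rightarrow>\<^sub>E UNIV \<and> (\<Sum>i<k. q ^ \<gamma> i) = j}. \<Prod>i<k. a (\<gamma> i))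
      = (\<Sum>\<gamma>\<in>{\<gamma>. \<gamma> \<in> {..<k} \<rightarrow>\<^sub>E UNIV \<and> (\<Sum>i<k. q ^ \<gamma> i) = j}. inverse (CPi j))"
  proof (intro sum.cong refl)
    fix \<gamma> assume "\<gamma> \<in> {\<gamma>. \<gamma> \<in> {..<k} \<rightarrow>\<^sub>E UNIV \<and> (\<Sum>i<k. q ^ \<gamma> i) = j}"
    hence g: "(\<Sum>i<k. q ^ \<gamma> i) = j" by auto
    have "(\<Prod>i<k. a (\<gamma> i)) = inverse (\<Prod>i<k. Dfr (\<gamma> i))"
      unfolding a_def using prod_inversef[of "\<lambda>i. Dfr (\<gamma> i)" "{..<k}"] by (simp add: o_def)
    also have "(\<Prod>i<k. Dfr (\<gamma> i)) = (CPi j :: 'a poly fract)"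
      using CPi_qabs[OF kq, of \<gamma>] g by (simp add: q_def)
    finally show "(\<Prod>i<k. a (\<gamma> i)) = inverse (CPi j)" .
  qed
  finally show ?thesis by (simp add: q_def)
qed



theorem proposition3p7:
  assumes q3: "CARD('a::{field,finite}) \<ge> 3"
  shows "(BC 0 :: 'a poly fract) = 1 \<and>
    (\<forall>n (c::'a). n > 0 \<longrightarrow> (CARD('a) - 1) dvd n \<longrightarrow>
       (1 - (theta - to_fract [:c:]) ^ n) * (BC n :: 'a poly fract) =
       (\<Sum>\<beta>\<in>{\<beta>. \<beta> \<in> {..<CARD('a) - 1} \<rightarrow>\<^sub>E UNIV \<and> qabs TYPE('a) \<beta> \<le> n}.
          Cbinom n [n - qabs TYPE('a) \<beta>, qabs TYPE('a) \<beta>]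
          * (theta - to_fract [:c:]) powi (int n - 1 - int (qabs TYPE('a) \<beta>))
          * BC (n - qabs TYPE('a) \<beta>)))"
proof -
  define q where "q = CARD('a)"
  define k where "k = q - 1"
  have q1: "1 < q" using q_gt1[where 'a='a] by (simp add: q_def)
  have qk: "q = Suc k" using q1 by (simp add: k_def)
  have kq: "k < CARD('a)" using qk by (simp add: q_def)
  define e where "e = (carlitz_exp :: 'a poly fract fps)"
  define u where "u = fps_shift 1 e"
  have e0: "e $ 0 = 0"
  proof -
    have "\<not> (\<exists>j. (0::nat) = CARD('a) ^ j)" by simp
    thus ?thesis unfolding e_def by (rule e_nth_not)
  qed
  have e1: "e $ 1 = 1"
    using e_nth_pow[of 0, where 'a='a] by (simp add: e_def Dfr_0)
  have u0: "u $ 0 = 1" using e1 by (simp add: u_def)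
  have eu: "e = fps_X * u"
  proof (rule fps_ext)
    fix n show "e $ n = (fps_X * u) $ n" using e0 by (cases n) (auto simp: u_def)
  qed
  have enz: "e \<noteq> 0" using e1 by auto
  define B where "B = inverse u"
  have BX: "fps_X / e = B"
  proof -
    have "fps_X / e = (fps_X * 1) / (fps_X * u)" by (simp add: eu)
    also have "\<dots> = 1 / u" by (rule div_mult_mult1) simp
    also have "\<dots> = B" using u0 by (simp add: fps_divide_unit B_def)
    finally show ?thesis .
  qed
  have Be: "B * e = fps_X"
    using inverse_mult_eq_1[of u] u0 by (simp add: eu B_def mult.left_commute)
  have B0: "B $ 0 = 1" using u0 by (simp add: B_def)
  have BCn: "(BC m :: 'a poly fract) = CPi m * B $ m" for m
    by (simp add: BC_def BX[unfolded e_def])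
  have part1: "(BC 0 :: 'a poly fract) = 1" by (simp add: BCn B0 CPi_0)
  have part2: "(1 - (theta - to_fract [:c:]) ^ n) * (BC n :: 'a poly fract) =
       (\<Sum>\<beta>\<in>{\<beta>. \<beta> \<in> {..<CARD('a) - 1} \<rightarrow>\<^sub>E UNIV \<and> qabs TYPE('a) \<beta> \<le> n}.
          Cbinom n [n - qabs TYPE('a) \<beta>, qabs TYPE('a) \<beta>]
          * (theta - to_fract [:c:]) powi (int n - 1 - int (qabs TYPE('a) \<beta>))
          * BC (n - qabs TYPE('a) \<beta>))" for n and c :: 'a
  proof -
    define t :: "'a poly fract" where "t = theta - to_fract [:c:]"
    have tnz: "t \<noteq> 0" unfolding t_def t_eq using t_nz[of c] by (simp del: to_fract_diff)
    define P where "P = e ^ k"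
    have SE: "scale t e = fps_const t * e + e ^ q"
      by (rule fps_ext) (simp add: func_eq e_def t_def q_def)
    have eP: "e ^ q = e * P" by (simp add: qk P_def)
    have "e * (scale t B * (fps_const t + P)) = scale t B * scale t e"
      by (simp add: SE eP algebra_simps)
    also have "\<dots> = scale t (B * e)" by (simp add: scale_mult)
    also have "\<dots> = fps_const t * fps_X" by (simp only: Be scale_X)
    also have "\<dots> = e * (fps_const t * B)" by (simp only: Be[symmetric] mult_ac)
    finally have "scale t B * (fps_const t + P) = fps_const t * B" using enz by simp
    hence "scale t B * fps_const t + scale t B * P = fps_const t * B" by (simp only: distrib_left)
    hence "(scale t B * fps_const t + scale t B * P) $ n = (fps_const t * B) $ n" by (rule arg_cong)
    hence "(scale t B * fps_const t) $ n + (scale t B * P) $ n = (fps_const t * B) $ n"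
      by (simp only: fps_add_nth)
    hence C: "t ^ n * B $ n * t + (\<Sum>i=0..n. t ^ i * B $ i * P $ (n - i)) = t * B $ n"
      by (simp add: fps_mult_nth[of "scale t B" P])
    define s where "s = qabs TYPE('a)"
    have s_def': "s \<beta> = (\<Sum>i<k. q ^ \<beta> i)" for \<beta> by (simp add: s_def qabs_def k_def q_def)
    define S where "S = {\<beta>. \<beta> \<in> {..<k} \<rightarrow>\<^sub>E UNIV \<and> s \<beta> \<le> n}"
    define G where "G = (\<lambda>j. CPi n * inverse t * (t ^ (n - j) * B $ (n - j) * inverse (CPi j)))"
    have finS: "finite S"
    proof (rule finite_subset)
      show "S \<subseteq> PiE {..<k} (\<lambda>_. {..n})"
      proof
        fix \<beta> assume "\<beta> \<in> S"
        hence b: "\<beta> \<in> {..<k} \<rightarrow>\<^sub>E UNIV" "s \<beta> \<le> n" by (auto simp: S_def)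
        have "\<beta> i \<le> n" if "i < k" for i
        proof -
          have "\<beta> i < q ^ \<beta> i" using m_less_pow[of "\<beta> i", where 'a='a] by (simp add: q_def)
          also have "q ^ \<beta> i \<le> s \<beta>" unfolding s_def'
            by (rule member_le_sum[of i "{..<k}" "\<lambda>i. q ^ \<beta> i"]) (use that in auto)
          finally show ?thesis using b by simp
        qed
        with b show "\<beta> \<in> PiE {..<k} (\<lambda>_. {..n})" by (auto simp: PiE_iff)
      qed
    qed (simp add: finite_PiE)
    have trm: "Cbinom n [n - s \<beta>, s \<beta>] * t powi (int n - 1 - int (s \<beta>)) * BC (n - s \<beta>) = G (s \<beta>)"
      if "\<beta> \<in> S" for \<beta>
    proof -
      have sn: "s \<beta> \<le> n" using that by (simp add: S_def)
      have ee: "int n - 1 - int (s \<beta>) = int (n - s \<beta>) - 1" using sn by simp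
      have pw: "t powi (int n - 1 - int (s \<beta>)) = t ^ (n - s \<beta>) / t"
        unfolding ee using tnz by (subst power_int_diff) auto
      show ?thesis
        unfolding pw Cbinom_def BCn G_def using CPi_nz[of "n - s \<beta>", where 'a='a] CPi_nz[of "s \<beta>", where 'a='a] tnz
        by (simp add: field_simps)
    qed
    have "(\<Sum>\<beta>\<in>S. Cbinom n [n - s \<beta>, s \<beta>] * t powi (int n - 1 - int (s \<beta>)) * BC (n - s \<beta>))
        = (\<Sum>\<beta>\<in>S. G (s \<beta>))"
      by (intro sum.cong refl trm)
    also have "\<dots> = (\<Sum>j\<le>n. \<Sum>\<beta>\<in>{\<beta>. \<beta> \<in> S \<and> s \<beta> = j}. G (s \<beta>))"
      by (rule sum.group[symmetric]) (use finS in \<open>auto simp: S_def\<close>)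
    also have "\<dots> = (\<Sum>j\<le>n. CPi n * inverse t * (t ^ (n - j) * B $ (n - j) * P $ j))"
    proof (intro sum.cong refl)
      fix j assume j: "j \<in> {..n}"
      have "{\<beta>. \<beta> \<in> S \<and> s \<beta> = j} = {\<gamma>. \<gamma> \<in> {..<k} \<rightarrow>\<^sub>E UNIV \<and> (\<Sum>i<k. CARD('a) ^ \<gamma> i) = j}"
        using j by (auto simp: S_def s_def' q_def)
      hence "(\<Sum>\<beta>\<in>{\<beta>. \<beta> \<in> S \<and> s \<beta> = j}. G (s \<beta>)) = (\<Sum>\<beta>\<in>{\<gamma>. \<gamma> \<in> {..<k} \<rightarrow>\<^sub>E UNIV \<and> (\<Sum>i<k. CARD('a) ^ \<gamma> i) = j}. G j)"
        by (intro sum.cong) (auto simp: s_def' q_def)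
      also have "\<dots> = CPi n * inverse t * (t ^ (n - j) * B $ (n - j)) * (\<Sum>\<beta>\<in>{\<gamma>. \<gamma> \<in> {..<k} \<rightarrow>\<^sub>E UNIV \<and> (\<Sum>i<k. CARD('a) ^ \<gamma> i) = j}. inverse (CPi j))"
        by (simp add: G_def sum_distrib_left mult.assoc)
      also have "(\<Sum>\<beta>\<in>{\<gamma>. \<gamma> \<in> {..<k} \<rightarrow>\<^sub>E UNIV \<and> (\<Sum>i<k. CARD('a) ^ \<gamma> i) = j}. inverse (CPi j)) = P $ j"
        unfolding P_def e_def by (rule P_nth[OF kq, symmetric])
      finally show "(\<Sum>\<beta>\<in>{\<beta>. \<beta> \<in> S \<and> s \<beta> = j}. G (s \<beta>)) = CPi n * inverse t * (t ^ (n - j) * B $ (n - j) * P $ j)"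
        by (simp add: mult.assoc)
    qed
    also have "\<dots> = CPi n * inverse t * (\<Sum>j\<le>n. t ^ (n - j) * B $ (n - j) * P $ j)"
      by (simp add: sum_distrib_left)
    also have "(\<Sum>j\<le>n. t ^ (n - j) * B $ (n - j) * P $ j) = (\<Sum>i=0..n. t ^ i * B $ i * P $ (n - i))"
    proof -
      have "(\<Sum>i=0..n. t ^ i * B $ i * P $ (n - i)) = (\<Sum>i=0..n. t ^ (n + 0 - i) * B $ (n + 0 - i) * P $ (n - (n + 0 - i)))"
        by (rule sum.atLeastAtMost_rev)
      also have "\<dots> = (\<Sum>j\<le>n. t ^ (n - j) * B $ (n - j) * P $ j)"
        by (simp add: atLeast0AtMost)
      finally show ?thesis by simp
    qed
    also have "\<dots> = t * B $ n - t ^ n * B $ n * t" using C by (simp add: algebra_simps)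
    also have "CPi n * inverse t * (t * B $ n - t ^ n * B $ n * t) = (1 - t ^ n) * BC n"
      using tnz by (simp add: BCn field_simps)
    finally have "(\<Sum>\<beta>\<in>S. Cbinom n [n - s \<beta>, s \<beta>] * t powi (int n - 1 - int (s \<beta>)) * BC (n - s \<beta>))
                   = (1 - t ^ n) * BC n" .
    thus ?thesis by (simp add: S_def s_def t_def k_def q_def)
  qed
  show ?thesis using part1 part2 by blast
qed

end
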